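(* Assume (A2), (A3), that $\phi'>0$ on $\mathbb R_{++}$ (so $\phi^{-1}$ is continuously differentiable with positive derivative), and that $V$ is irreducible. Let $q\in\partial\mathcal F$ and $u(q)=\big((\phi^{-1})'(q_1)/\phi^{-1}(q_1),\dots,(\phi^{-1})'(q_K)/\phi^{-1}(q_K)\big)>0$. Let $n_0\in\mathcal N$ be any index with $\lambda_{n_0}(q)=\max_{n\in\mathcal N}\lambda_n(q)$, where $\lambda_n(q)=\rho(G(q)B^{(n)})$, and let $y,x\in\mathbb R_{++}^K$ be left and right eigenvectors of $G(q)B^{(n_0)}$ associated with $\lambda_{n_0}(q)$. If $w=c\,u(q)\circ y\circ x$ for some $c>0$, then every maximizer $p^*$ of $p\mapsto F(p,w)$ over $\mathcal P_+$ satisfies $\phi(\mathrm{SIR}_k(p^* )/\gamma_k)=q_k$ for all $k\in\mathcal K$.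
   Context: Network model: $K\ge 2$ links, $\mathcal K=\{1,\dots,K\}$. Power constraint set $\mathcal P=\{p\in\mathbb R_+^K: Cp\le\hat p\}$, where $C\in\{0,1\}^{N\times K}$ has at least one entry equal to $1$ in each column and $\hat p=(P_1,\dots,P_N)\in\mathbb R_{++}^N$; $\mathcal P_+=\mathcal P\cap\mathbb R_{++}^K$; $\mathcal N=\{1,\dots,N\}$; $c_n$ is the $n$-th row of $C$ as a column vector. Gain matrix $V\in\mathbb R_+^{K\times K}$ with zero diagonal, noise vector $z\in\mathbb R_{++}^K$, $\mathrm{SIR}_k(p)=p_k/((Vp)_k+z_k)$. SIR targets $\gamma_k>0$, $\Gamma=\mathrm{diag}(\gamma_1,\dots,\gamma_K)$. $B^{(n)}=\Gamma V+\frac1{P_n}\Gamma z c_n^T$. Assumption (A2): $\phi:\mathbb R_{++}\to\mathbb R$ is continuously differentiable and strictly increasing; $\mathcal Q=\phi(\mathbb R_{++})$. Assumption (A3): $\phi^{-1}:\mathcal Q\to\mathbb R_{++}$ is log-convex. $G(q)=\mathrm{diag}(\phi^{-1}(q_1),\dots,\phi^{-1}(q_K))$. Feasible QoS region $\mathcal F=\{q\in\mathcal Q^K:\exists p\in\mathcal P_+,\ q_k=\phi(\mathrm{SIR}_k(p)/\gamma_k)\ \forall k\}$; for $q\in\mathcal F$ the corresponding power vector is unique. $\partial\mathcal F$ is the set of $q\in\mathcal F$ whose corresponding power vector satisfies $Cp\le\hat p$ with equality in at least one component. Aggregate utility: $F(p,w)=\sum_{k\in\mathcal K}w_k\phi(\mathrm{SIR}_k(p)/\gamma_k)$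 for $w\in\mathbb R_{++}^K$; under (A2),(A3) its maximum over $\mathcal P_+$ is attained. $\circ$ denotes the entrywise product; $\rho(\cdot)$ the spectral radius. *)

theory Defs
  imports "HOL-Analysis.Analysis"
begin

text \<open>Links are indexed by a finite type 'k (K = CARD('k)), power constraints by a
finite type 'n (N = CARD('n)). Vectors are real^'k, matrices real^'k^'k, C :: real^'k^'n.\<close>

definition SIR :: "real^'k^'k \<Rightarrow> real^'k \<Rightarrow> 'k \<Rightarrow> real^'k \<Rightarrow> real" where
  "SIR V z k p = p$k / ((V *v p)$k + z$k)"

definition Pplus :: "real^'k^'n \<Rightarrow> real^'n \<Rightarrow> (real^'k) set" where
  "Pplus C phat = {p. (\<forall>k. p$k > 0) \<and> (\<forall>n. (C *v p)$n \<le> phat$n)}"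

definition phiinv :: "(real \<Rightarrow> real) \<Rightarrow> real \<Rightarrow> real" where
  "phiinv \<phi> = the_inv_into {0<..} \<phi>"

definition boundaryF ::
  "(real \<Rightarrow> real) \<Rightarrow> real^'k^'n \<Rightarrow> real^'n \<Rightarrow> real^'k^'k \<Rightarrow> real^'k \<Rightarrow> real^'k \<Rightarrow> (real^'k) set" where
  "boundaryF \<phi> C phat V z \<gamma> = {q. \<exists>p \<in> Pplus C phat.
      (\<forall>k. q$k = \<phi> (SIR V z k p / \<gamma>$k)) \<and> (\<exists>n. (C *v p)$n = phat$n)}"

definition aggF :: "(real \<Rightarrow> real) \<Rightarrow> real^'k^'k \<Rightarrow> real^'k \<Rightarrow> real^'k \<Rightarrow> real^'k \<Rightarrow> real^'k \<Rightarrow> real" where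
  "aggF \<phi> V z \<gamma> p w = (\<Sum>k\<in>UNIV. w$k * \<phi> (SIR V z k p / \<gamma>$k))"

text \<open>B^(n) = Gamma V + (1/P_n) Gamma z c_n^T.\<close>
definition Bmat :: "real^'k^'n \<Rightarrow> real^'n \<Rightarrow> real^'k^'k \<Rightarrow> real^'k \<Rightarrow> real^'k \<Rightarrow> 'n \<Rightarrow> real^'k^'k" where
  "Bmat C phat V z \<gamma> n = (\<chi> i j. \<gamma>$i * V$i$j + (1 / phat$n) * \<gamma>$i * z$i * C$n$j)"

definition Gmat :: "(real \<Rightarrow> real) \<Rightarrow> real^'k \<Rightarrow> real^'k^'k" where
  "Gmat \<phi> q = (\<chi> i j. if i = j then phiinv \<phi> (q$i) else 0)"

definition cmat :: "real^'k^'k \<Rightarrow> complex^'k^'k" where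
  "cmat A = (\<chi> i j. complex_of_real (A$i$j))"

definition spectral_radius :: "real^'k^'k \<Rightarrow> real" where
  "spectral_radius A = Max {cmod l | l. \<exists>v. v \<noteq> 0 \<and> cmat A *v v = l *s v}"

definition irreducible_mat :: "real^'k^'k \<Rightarrow> bool" where
  "irreducible_mat A \<longleftrightarrow> (\<forall>i j. (i, j) \<in> {(a, b). A$a$b > 0}\<^sup>+)"

end

theory Submission
  imports Defs
begin


lemma mv_smult: fixes M :: "complex^'k^'k" shows "M *v (c *s v) = c *s (M *v v)"
  by (simp add: vec_eq_iff matrix_vector_mult_def sum_distrib_left algebra_simps)

lemma mv_sum: fixes M :: "complex^'k^'k" shows "finite F \<Longrightarrow> M *v (\<Sum>l\<in>F. f l) = (\<Sum>l\<in>F. M *v f l)"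
  by (induction F rule: finite_induct) (auto simp: matrix_vector_right_distrib)

lemma smult_sum: fixes c :: complex shows "c *s (\<Sum>l\<in>F. f l) = (\<Sum>l\<in>F. c *s (f l :: complex^'k))"
  by (simp add: vec_eq_iff sum_distrib_left sum_component)

lemma eig_indep:
  fixes M :: "complex^'k^'k"
  assumes "finite L" "\<forall>l\<in>L. v l \<noteq> 0 \<and> M *v v l = l *s v l"
  shows "\<forall>c. (\<Sum>l\<in>L. c l *s v l) = 0 \<longrightarrow> (\<forall>l\<in>L. c l = 0)"
  using assms
proof (induction L rule: finite_induct)
  case empty then show ?case by simp
next
  case (insert m F)
  show ?case
  proof (intro allI impI)
    fix c assume h: "(\<Sum>l\<in>insert m F. c l *s v l) = 0"
    let ?S = "\<Sum>l\<in>F. c l *s v l"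
    have h1: "c m *s v m + ?S = 0" using h insert by simp
    have "M *v (c m *s v m + ?S) = 0" using h1 by simp
    hence h2: "(c m * m) *s v m + (\<Sum>l\<in>F. (c l * l) *s v l) = 0"
      using insert by (simp add: matrix_vector_right_distrib mv_sum mv_smult vector_smult_assoc mult.commute)
    have "m *s (c m *s v m + ?S) = 0" using h1 by simp
    hence h3: "(c m * m) *s v m + (\<Sum>l\<in>F. (c l * m) *s v l) = 0"
      by (simp add: vector_add_ldistrib vector_smult_assoc smult_sum mult.commute)
    have "(\<Sum>l\<in>F. (c l * (l - m)) *s v l) = 0"
      using arg_cong2[OF h2 h3, of "(-)"]
      by (simp add: right_diff_distrib vector_sub_rdistrib sum_subtractf[symmetric])
    moreover have IH: "\<forall>c. (\<Sum>l\<in>F. c l *s v l) = 0 \<longrightarrow> (\<forall>l\<in>F. c l = 0)" using insert by simp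
    ultimately have z: "\<forall>l\<in>F. c l * (l - m) = 0" using IH[rule_format, of "\<lambda>l. c l * (l - m)"] by blast
    hence "\<forall>l\<in>F. c l = 0" using insert by auto
    hence "?S = 0" by simp
    hence "c m = 0" using h1 insert by simp
    thus "\<forall>l\<in>insert m F. c l = 0" using \<open>\<forall>l\<in>F. c l = 0\<close> by simp
  qed
qed

lemma eig_finite:
  fixes M :: "complex^'k^'k"
  shows "finite {l. \<exists>v. v \<noteq> 0 \<and> M *v v = l *s v}" (is "finite ?E")
proof (rule ccontr)
  assume inf: "infinite ?E"
  define v where "v l = (SOME v. v \<noteq> 0 \<and> M *v v = l *s v)" for l
  have vE: "v l \<noteq> 0 \<and> M *v v l = l *s v l" if "l \<in> ?E" for l
    using someI_ex[of "\<lambda>v. v \<noteq> 0 \<and> M *v v = l *s v"] that unfolding v_def by auto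
  obtain F where F: "finite F" "card F = DIM(complex^'k) + 1" "F \<subseteq> ?E"
    using infinite_arbitrarily_large[OF inf] by blast
  have inj: "inj_on v F"
  proof (rule inj_onI)
    fix a b assume ab: "a \<in> F" "b \<in> F" "v a = v b"
    have "a \<in> ?E" "b \<in> ?E" using ab F(3) by auto
    then have "M *v v a = a *s v a" "M *v v b = b *s v b" using vE by auto
    then have "a *s v a = b *s v a" using ab(3) by (metis)
    then have "(a - b) *s v a = 0" by (simp add: vector_sub_rdistrib)
    thus "a = b" using vE[of a] ab F(3) by auto
  qed
  have ind: "independent (v ` F)"
  proof
    assume "dependent (v ` F)"
    then obtain u where u: "\<exists>w\<in>v ` F. u w \<noteq> 0" "(\<Sum>w\<in>v ` F. u w *\<^sub>R w) = 0"
      using real_vector.dependent_finite[of "v ` F"] F(1) by auto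
    have "(\<Sum>l\<in>F. u (v l) *\<^sub>R v l) = 0" using u(2) by (simp add: sum.reindex[OF inj])
    moreover have "u (v l) *\<^sub>R v l = complex_of_real (u (v l)) *s v l" for l
    proof (subst vec_eq_iff, intro allI)
      fix i
      have "u (v l) *\<^sub>R (v l $ i) = complex_of_real (u (v l)) * v l $ i" by (simp add: scaleR_conv_of_real)
      thus "(u (v l) *\<^sub>R v l) $ i = (complex_of_real (u (v l)) *s v l) $ i" by simp
    qed
    ultimately have "(\<Sum>l\<in>F. complex_of_real (u (v l)) *s v l) = 0" by simp
    hence "\<forall>l\<in>F. complex_of_real (u (v l)) = 0"
    proof -
      have "\<forall>l\<in>F. v l \<noteq> 0 \<and> M *v v l = l *s v l" using F(3) vE by auto
      from eig_indep[OF F(1) this, rule_format, of "\<lambda>l. complex_of_real (u (v l))"] show ?thesis using \<open>(\<Sum>l\<in>F. complex_of_real (u (v l)) *s v l) = 0\<close> by blast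
    qed
    thus False using u(1) by auto
  qed
  have "card (v ` F) \<le> DIM(complex^'k)" using independent_bound[OF ind] by simp
  thus False using F(2) card_image[OF inj] by simp
qed

lemma sr_ge1:
  fixes A :: "real^'k^'k"
  assumes "A *v p = p" "p \<noteq> 0"
  shows "spectral_radius A \<ge> 1"
proof -
  define pc where "pc = (\<chi> i. complex_of_real (p$i))"
  have "pc \<noteq> 0" using assms(2) by (auto simp: pc_def vec_eq_iff)
  moreover have "cmat A *v pc = 1 *s pc"
  proof -
    have "(cmat A *v pc)$i = complex_of_real ((A *v p)$i)" for i
      by (simp add: cmat_def pc_def matrix_vector_mult_def)
    thus ?thesis using assms(1) by (simp add: vec_eq_iff pc_def)
  qed
  ultimately have mem: "1 \<in> {cmod l | l. \<exists>v. v \<noteq> 0 \<and> cmat A *v v = l *s v}"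
  proof -
    have "\<exists>l. 1 = cmod l \<and> (\<exists>v. v \<noteq> 0 \<and> cmat A *v v = l *s v)"
      using \<open>pc \<noteq> 0\<close> \<open>cmat A *v pc = 1 *s pc\<close> by (intro exI[of _ 1]) auto
    thus ?thesis by (simp only: mem_Collect_eq)
  qed
  have fin: "finite {cmod l | l. \<exists>v. v \<noteq> 0 \<and> cmat A *v v = l *s v}"
  proof -
    have "{cmod l | l. \<exists>v. v \<noteq> 0 \<and> cmat A *v v = l *s v} = cmod ` {l. \<exists>v. v \<noteq> 0 \<and> cmat A *v v = l *s v}" by auto
    thus ?thesis using eig_finite[of "cmat A"] by simp
  qed
  show ?thesis unfolding spectral_radius_def by (rule Max_ge[OF fin mem])
qed



lemma tangent:
  fixes \<phi> :: "real \<Rightarrow> real"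
  assumes diff: "\<forall>t>0. \<phi> differentiable (at t)"
    and mono: "strict_mono_on {0<..} \<phi>"
    and A3: "convex_on (\<phi> ` {0<..}) (\<lambda>s. ln (phiinv \<phi> s))"
    and dpos: "\<forall>t>0. deriv \<phi> t > 0"
    and t: "t > 0" and t': "t' > 0"
  shows "deriv (phiinv \<phi>) (\<phi> t) / t * (\<phi> t' - \<phi> t) \<le> ln t' - ln t"
proof -
  let ?g = "phiinv \<phi>"
  have inj: "inj_on \<phi> {0<..}" using mono by (rule strict_mono_on_imp_inj_on)
  have ginv: "?g (\<phi> s) = s" if "s > 0" for s
    unfolding phiinv_def using the_inv_into_f_f[OF inj] that by simp
  have cont: "isCont \<phi> s" if "s > 0" for s
    using diff that by (simp add: differentiable_imp_continuous_within)
  have lt1: "\<phi> (t/2) < \<phi> t" and lt2: "\<phi> t < \<phi> (2*t)"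
    using mono t by (auto intro!: strict_mono_onD[OF mono])
  have gcont: "isCont ?g (\<phi> t)"
    by (rule isCont_inverse_function2[of "t/2" t "2*t"]) (use t ginv cont in auto)
  have surj: "\<phi> (?g y) = y \<and> ?g y > 0" if yy: "\<phi> (t/2) < y" "y < \<phi> (2*t)" for y
  proof -
    obtain s where s: "t/2 \<le> s" "s \<le> 2*t" "\<phi> s = y"
      proof -
      have "\<exists>s. t/2 \<le> s \<and> s \<le> 2*t \<and> \<phi> s = y"
        by (rule IVT[of \<phi> "t/2" y "2*t"]) (use yy t cont in auto)
      thus ?thesis using that by blast
    qed
    have "s > 0" using s t by simp
    thus ?thesis using s ginv by auto
  qed
  have der: "DERIV \<phi> t :> deriv \<phi> t"
    using diff t by (simp add: DERIV_deriv_iff_real_differentiable)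
  have dg: "DERIV ?g (\<phi> t) :> inverse (deriv \<phi> t)"
    by (rule DERIV_inverse_function[where f=\<phi> and g="?g" and x="\<phi> t" and a="\<phi> (t/2)" and b="\<phi> (2*t)"])
       (use der ginv t dpos lt1 lt2 surj gcont in auto)
  have dgv: "deriv ?g (\<phi> t) = inverse (deriv \<phi> t)" using dg by (rule DERIV_imp_deriv)
  have dl: "DERIV (\<lambda>s. ln (?g s)) (\<phi> t) :> inverse t * inverse (deriv \<phi> t)"
    using DERIV_chain2[OF _ dg, of ln "inverse t"] DERIV_ln[of t] ginv t by simp
  have conn: "connected (\<phi> ` {0<..})"
    by (rule connected_continuous_image) (use cont in \<open>auto intro!: continuous_at_imp_continuous_on\<close>)
  have int: "\<phi> t \<in> interior (\<phi> ` {0<..})"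
  proof (rule interiorI[of "{\<phi> (t/2)<..<\<phi> (2*t)}"])
    show "{\<phi> (t / 2)<..<\<phi> (2 * t)} \<subseteq> \<phi> ` {0<..}"
    proof
      fix y assume "y \<in> {\<phi> (t / 2)<..<\<phi> (2 * t)}"
      then have "\<phi> (?g y) = y \<and> ?g y > 0" using surj by auto
      thus "y \<in> \<phi> ` {0<..}" by (metis greaterThan_iff image_eqI)
    qed
  qed (use lt1 lt2 in auto)
  have "ln (?g (\<phi> t')) - ln (?g (\<phi> t)) \<ge> (inverse t * inverse (deriv \<phi> t)) * (\<phi> t' - \<phi> t)"
    by (rule convex_on_imp_above_tangent[OF A3 conn int])
       (use t' dl in \<open>auto intro: has_field_derivative_at_within\<close>)
  thus ?thesis using ginv t t' dgv by (simp add: divide_inverse mult.commute)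
qed



theorem theorem3:
  fixes C :: "real^'k^'n" and phat :: "real^'n" and V :: "real^'k^'k"
    and z \<gamma> q y x :: "real^'k" and \<phi> :: "real \<Rightarrow> real" and n0 :: 'n and c :: real
  assumes K2: "CARD('k) \<ge> 2"
    and C01: "\<forall>n k. C$n$k = 0 \<or> C$n$k = 1"
    and Ccol: "\<forall>k. \<exists>n. C$n$k = 1"
    and phat_pos: "\<forall>n. phat$n > 0"
    and V_nonneg: "\<forall>i j. V$i$j \<ge> 0"
    and V_diag: "\<forall>i. V$i$i = 0"
    and z_pos: "\<forall>k. z$k > 0"
    and \<gamma>_pos: "\<forall>k. \<gamma>$k > 0"
    and A2_diff: "\<forall>t>0. \<phi> differentiable (at t)"
    and A2_cont: "continuous_on {0<..} (deriv \<phi>)"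
    and A2_mono: "strict_mono_on {0<..} \<phi>"
    and A3: "convex_on (\<phi> ` {0<..}) (\<lambda>s. ln (phiinv \<phi> s))"
    and deriv_pos: "\<forall>t>0. deriv \<phi> t > 0"
    and V_irred: "irreducible_mat V"
    and q_bd: "q \<in> boundaryF \<phi> C phat V z \<gamma>"
    and n0_max: "\<forall>n. spectral_radius (Gmat \<phi> q ** Bmat C phat V z \<gamma> n)
                    \<le> spectral_radius (Gmat \<phi> q ** Bmat C phat V z \<gamma> n0)"
    and y_pos: "\<forall>k. y$k > 0" and x_pos: "\<forall>k. x$k > 0"
    and y_left: "y v* (Gmat \<phi> q ** Bmat C phat V z \<gamma> n0)
                 = spectral_radius (Gmat \<phi> q ** Bmat C phat V z \<gamma> n0) *s y"
    and x_right: "(Gmat \<phi> q ** Bmat C phat V z \<gamma> n0) *v x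
                 = spectral_radius (Gmat \<phi> q ** Bmat C phat V z \<gamma> n0) *s x"
    and c_pos: "c > 0"
    and w_def: "w = (\<chi> k. c * (deriv (phiinv \<phi>) (q$k) / phiinv \<phi> (q$k)) * y$k * x$k)"
  shows "\<forall>pstar \<in> Pplus C phat.
           (\<forall>p \<in> Pplus C phat. aggF \<phi> V z \<gamma> p w \<le> aggF \<phi> V z \<gamma> pstar w) \<longrightarrow>
           (\<forall>k. \<phi> (SIR V z k pstar / \<gamma>$k) = q$k)"
proof (intro ballI impI)
  fix pstar assume ps: "pstar \<in> Pplus C phat"
    and pmax: "\<forall>p \<in> Pplus C phat. aggF \<phi> V z \<gamma> p w \<le> aggF \<phi> V z \<gamma> pstar w"
  obtain p n1 where pP: "p \<in> Pplus C phat" and qp: "\<forall>k. q$k = \<phi> (SIR V z k p / \<gamma>$k)"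
    and n1: "(C *v p)$n1 = phat$n1"
    using q_bd unfolding boundaryF_def by blast
  have ppos: "\<forall>k. p$k > 0" and pC: "\<forall>n. (C *v p)$n \<le> phat$n" using pP by (auto simp: Pplus_def)
  have pspos: "\<forall>k. pstar$k > 0" and psC: "\<forall>n. (C *v pstar)$n \<le> phat$n" using ps by (auto simp: Pplus_def)
  have Vv_nn: "(V *v v)$k \<ge> 0" if "\<forall>k. v$k > 0" for v :: "real^'k" and k
    unfolding matrix_vector_mult_def using V_nonneg that by (simp add: less_imp_le sum_nonneg)
  define s where "s k = SIR V z k p" for k
  define s' where "s' k = SIR V z k pstar" for k
  have s_eq: "s k = p$k / ((V *v p)$k + z$k)" for k unfolding s_def SIR_def ..
  have s'_eq: "s' k = pstar$k / ((V *v pstar)$k + z$k)" for k unfolding s'_def SIR_def ..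
  have den_pos: "(V *v p)$k + z$k > 0" "(V *v pstar)$k + z$k > 0" for k
    using Vv_nn[OF ppos, of k] Vv_nn[OF pspos, of k] z_pos by (auto simp: add_nonneg_pos)
  have spos: "s k > 0" "s' k > 0" for k
    using s_eq s'_eq den_pos ppos pspos by auto
  have inj: "inj_on \<phi> {0<..}" using A2_mono by (rule strict_mono_on_imp_inj_on)
  have ginv: "phiinv \<phi> (\<phi> r) = r" if "r > 0" for r
    unfolding phiinv_def using the_inv_into_f_f[OF inj] that by simp
  have hq: "phiinv \<phi> (q$k) = s k / \<gamma>$k" for k
    using qp ginv spos \<gamma>_pos by (simp add: s_def)
  define A where "A n = Gmat \<phi> q ** Bmat C phat V z \<gamma> n" for n
  define lam where "lam = spectral_radius (A n0)"
  have Aent: "(A n)$k$j = s k * (V$k$j + z$k * C$n$j / phat$n)" for n k j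
  proof -
    have "(A n)$k$j = (\<Sum>l\<in>UNIV. (if k = l then phiinv \<phi> (q$k) else 0) * (Bmat C phat V z \<gamma> n)$l$j)"
      unfolding A_def matrix_matrix_mult_def Gmat_def by simp
    also have "\<dots> = phiinv \<phi> (q$k) * (Bmat C phat V z \<gamma> n)$k$j"
    proof -
      have "\<And>l. (if k = l then phiinv \<phi> (q$k) else 0) * (Bmat C phat V z \<gamma> n)$l$j
            = (if k = l then phiinv \<phi> (q$k) * (Bmat C phat V z \<gamma> n)$l$j else 0)" by simp
      thus ?thesis by (simp only: sum.delta' finite UNIV_I if_True)
    qed
    also have "\<dots> = s k * (V$k$j + z$k * C$n$j / phat$n)"
      using \<gamma>_pos[rule_format, of k] unfolding hq Bmat_def by (simp add: field_simps)
    finally show ?thesis .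
  qed
  have Cnn: "C$n$j \<ge> 0" for n j using C01 by (metis order_refl zero_le_one)
  have Cp_eq: "(C *v v)$n = (\<Sum>j\<in>UNIV. C$n$j * v$j)" for v :: "real^'k" and n
    by (simp add: matrix_vector_mult_def)
  have Vp_eq: "(V *v v)$k = (\<Sum>j\<in>UNIV. V$k$j * v$j)" for v :: "real^'k" and k
    by (simp add: matrix_vector_mult_def)
  have Arow: "(A n *v v)$k = s k * ((V *v v)$k + z$k * (C *v v)$n / phat$n)" for n k and v :: "real^'k"
  proof -
    have "(A n *v v)$k = (\<Sum>j\<in>UNIV. s k * (V$k$j * v$j) + (s k * z$k / phat$n) * (C$n$j * v$j))"
      by (simp add: matrix_vector_mult_def Aent algebra_simps)
    also have "\<dots> = s k * (V *v v)$k + (s k * z$k / phat$n) * (C *v v)$n"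
      by (simp add: sum.distrib sum_distrib_left[symmetric] Cp_eq Vp_eq sum_divide_distrib[symmetric])
    finally show ?thesis by (simp add: algebra_simps)
  qed
  have A1p: "A n1 *v p = p"
  proof -
    have "(A n1 *v p)$k = p$k" for k
    proof -
      have "(A n1 *v p)$k = s k * ((V *v p)$k + z$k)"
        using Arow[of n1 p k] n1 phat_pos[rule_format, of n1] by simp
      thus ?thesis using s_eq[of k] den_pos(1)[of k] by simp
    qed
    thus ?thesis by (simp add: vec_eq_iff)
  qed
  have "p \<noteq> 0" using ppos by (metis less_irrefl zero_index)
  hence "spectral_radius (A n1) \<ge> 1" using A1p sr_ge1 by blast
  hence lam1: "lam \<ge> 1" using n0_max unfolding lam_def A_def by (meson order_trans)
  define D where "D k j = V$k$j + z$k * C$n0$j / phat$n0" for k j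
  have Dnn: "D k j \<ge> 0" for k j
    unfolding D_def using V_nonneg z_pos phat_pos Cnn by (simp add: less_imp_le)
  define Dx where "Dx k = (\<Sum>j\<in>UNIV. D k j * x$j)" for k
  have hx: "lam * x$k = s k * Dx k" for k
  proof -
    have "(A n0 *v x)$k = lam * x$k" using x_right unfolding A_def lam_def by simp
    moreover have "(A n0 *v x)$k = s k * Dx k"
      unfolding matrix_vector_mult_def Dx_def by (simp add: Aent D_def sum_distrib_left algebra_simps)
    ultimately show ?thesis by simp
  qed
  have hy: "lam * y$j = (\<Sum>k\<in>UNIV. y$k * s k * D k j)" for j
  proof -
    have "(y v* A n0)$j = lam * y$j" using y_left unfolding A_def lam_def by simp
    moreover have "(y v* A n0)$j = (\<Sum>k\<in>UNIV. y$k * s k * D k j)"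
      unfolding vector_matrix_mult_def by (simp add: Aent D_def algebra_simps)
    ultimately show ?thesis by simp
  qed
  have lampos: "lam > 0" using lam1 by simp
  have Dxpos: "Dx k > 0" for k
  proof -
    have "s k * Dx k > 0" using hx[of k] lampos x_pos[rule_format, of k] by (metis mult_pos_pos)
    thus ?thesis using spos(1)[of k] by (simp add: zero_less_mult_iff)
  qed
  define a where "a k = y$k * x$k" for k
  have apos: "a k > 0" for k using x_pos y_pos by (simp add: a_def)
  have tang: "deriv (phiinv \<phi>) (q$k) / phiinv \<phi> (q$k) * (\<phi> (s' k / \<gamma>$k) - q$k) \<le> ln (s' k) - ln (s k)" for k
  proof -
    have g: "\<gamma>$k > 0" using \<gamma>_pos by simp
    have "deriv (phiinv \<phi>) (\<phi> (s k / \<gamma>$k)) / (s k / \<gamma>$k) * (\<phi> (s' k / \<gamma>$k) - \<phi> (s k / \<gamma>$k))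
          \<le> ln (s' k / \<gamma>$k) - ln (s k / \<gamma>$k)"
      by (rule tangent[OF A2_diff A2_mono A3 deriv_pos]) (use spos g in auto)
    moreover have "ln (s' k / \<gamma>$k) - ln (s k / \<gamma>$k) = ln (s' k) - ln (s k)"
    proof -
      have "ln (s' k / \<gamma>$k) = ln (s' k) - ln (\<gamma>$k)" by (rule ln_divide_pos) (use spos g in auto)
      moreover have "ln (s k / \<gamma>$k) = ln (s k) - ln (\<gamma>$k)" by (rule ln_divide_pos) (use spos g in auto)
      ultimately show ?thesis by linarith
    qed
    moreover have "q$k = \<phi> (s k / \<gamma>$k)" using qp s_def by simp
    ultimately show ?thesis using hq[of k] by simp
  qed
  have key0: "(\<Sum>k\<in>UNIV. a k * (ln (s' k) - ln (s k))) \<ge> 0"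
  proof -
    have "aggF \<phi> V z \<gamma> p w \<le> aggF \<phi> V z \<gamma> pstar w" using pmax pP by blast
    hence "(\<Sum>k\<in>UNIV. w$k * q$k) \<le> (\<Sum>k\<in>UNIV. w$k * \<phi> (s' k / \<gamma>$k))"
      unfolding aggF_def using qp by (simp add: s_def s'_def)
    hence "0 \<le> (\<Sum>k\<in>UNIV. w$k * (\<phi> (s' k / \<gamma>$k) - q$k))"
      by (simp add: sum_subtractf right_diff_distrib)
    also have "\<dots> \<le> (\<Sum>k\<in>UNIV. c * (a k * (ln (s' k) - ln (s k))))"
    proof (rule sum_mono)
      fix k
      have "c * a k > 0" using c_pos apos[of k] by simp
      hence "(c * a k) * (deriv (phiinv \<phi>) (q$k) / phiinv \<phi> (q$k) * (\<phi> (s' k / \<gamma>$k) - q$k))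
             \<le> (c * a k) * (ln (s' k) - ln (s k))"
        using tang[of k] by (intro mult_left_mono) auto
      thus "w$k * (\<phi> (s' k / \<gamma>$k) - q$k) \<le> c * (a k * (ln (s' k) - ln (s k)))"
        by (simp add: w_def a_def algebra_simps)
    qed
    also have "\<dots> = c * (\<Sum>k\<in>UNIV. a k * (ln (s' k) - ln (s k)))" by (simp add: sum_distrib_left)
    finally show ?thesis using c_pos by (simp add: zero_le_mult_iff)
  qed
  define r where "r j = pstar$j / x$j" for j
  define d where "d k = (\<Sum>j\<in>UNIV. D k j * pstar$j)" for k
  define E where "E k = (V *v pstar)$k + z$k" for k
  define m where "m k = d k / Dx k" for k
  define M where "M k j = D k j * x$j / Dx k" for k j
  define eps where "eps k = ln (E k / d k)" for k
  define dl where "dl k j = M k j * ((r j / m k - 1) - ln (r j / m k))" for k j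
  have rpos: "r j > 0" for j using pspos x_pos by (simp add: r_def)
  have deq: "d k = (V *v pstar)$k + z$k * (C *v pstar)$n0 / phat$n0" for k
  proof -
    have "d k = (\<Sum>j\<in>UNIV. V$k$j * pstar$j + (z$k / phat$n0) * (C$n0$j * pstar$j))"
      unfolding d_def D_def by (simp add: algebra_simps)
    also have "\<dots> = (V *v pstar)$k + (z$k / phat$n0) * (C *v pstar)$n0"
      by (simp add: sum.distrib sum_distrib_left[symmetric] Cp_eq Vp_eq sum_divide_distrib[symmetric])
    finally show ?thesis by simp
  qed
  have Epos: "E k > 0" for k using den_pos(2) by (simp add: E_def)
  have E_ge: "E k \<ge> d k" for k
  proof -
    have "z$k * (C *v pstar)$n0 / phat$n0 \<le> z$k"
      using psC z_pos phat_pos[rule_format, of n0] by (simp add: divide_le_eq less_imp_le mult_left_mono)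
    thus ?thesis using deq[of k] by (simp add: E_def)
  qed
  have dpos: "d k > 0" for k
  proof -
    have "\<exists>j. D k j * x$j > 0"
    proof (rule ccontr)
      assume "\<not> ?thesis"
      hence "\<forall>j. D k j * x$j \<le> 0" by (simp add: not_less)
      hence "Dx k \<le> 0" unfolding Dx_def by (simp add: sum_nonpos)
      thus False using Dxpos[of k] by simp
    qed
    then obtain j where j: "D k j * x$j > 0" by blast
    hence "D k j > 0" using x_pos[rule_format, of j] by (simp add: zero_less_mult_iff)
    hence "D k j * pstar$j > 0" using pspos by simp
    also have "D k j * pstar$j \<le> d k" unfolding d_def
      by (rule member_le_sum) (use Dnn pspos in \<open>auto intro!: mult_nonneg_nonneg simp: less_imp_le\<close>)
    finally show ?thesis .
  qed
  have mpos: "m k > 0" for k using dpos Dxpos by (simp add: m_def)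
  have Mnn: "M k j \<ge> 0" for k j using Dnn x_pos Dxpos by (simp add: M_def less_imp_le)
  have Msum: "(\<Sum>j\<in>UNIV. M k j) = 1" for k
    using Dxpos[of k] by (simp add: M_def Dx_def sum_divide_distrib[symmetric])
  have Mr: "(\<Sum>j\<in>UNIV. M k j * r j) = m k" for k
  proof -
    have "M k j * r j = D k j * pstar$j / Dx k" for j using x_pos[rule_format, of j] by (simp add: M_def r_def)
    thus ?thesis by (simp add: m_def d_def sum_divide_distrib)
  qed
  have dlnn: "dl k j \<ge> 0" for k j
  proof -
    have "ln (r j / m k) \<le> r j / m k - 1" using rpos mpos by (intro ln_le_minus_one) simp
    thus ?thesis unfolding dl_def using Mnn by simp
  qed
  have F4: "ln (m k) = (\<Sum>j\<in>UNIV. M k j * ln (r j)) + (\<Sum>j\<in>UNIV. dl k j)" for k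
  proof -
    have e: "dl k j = M k j * r j / m k - M k j - M k j * ln (r j) + M k j * ln (m k)" for j
      unfolding dl_def using rpos[of j] mpos[of k] by (simp add: ln_divide_pos algebra_simps)
    have "(\<Sum>j\<in>UNIV. dl k j) = (\<Sum>j\<in>UNIV. M k j * r j) / m k - (\<Sum>j\<in>UNIV. M k j)
           - (\<Sum>j\<in>UNIV. M k j * ln (r j)) + (\<Sum>j\<in>UNIV. M k j) * ln (m k)"
      unfolding e by (simp add: sum.distrib sum_subtractf sum_divide_distrib sum_distrib_right)
    thus ?thesis using Mr Msum mpos[of k] by simp
  qed
  have F5: "ln (s' k) - ln (s k) = ln (r k) - ln (m k) - ln lam - eps k" for k
  proof -
    have s'e: "s' k = pstar$k / E k" using s'_eq by (simp add: E_def)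
    have se: "s k = lam * x$k / Dx k" using hx[of k] Dxpos[of k] by (simp add: field_simps)
    have xk: "x$k > 0" "pstar$k > 0" using x_pos pspos by auto
    have "ln (s' k) = ln (pstar$k) - ln (E k)" using s'e xk Epos by (simp add: ln_divide_pos)
    moreover have "ln (s k) = ln lam + ln (x$k) - ln (Dx k)" using se xk lampos Dxpos by (simp add: ln_divide_pos ln_mult)
    moreover have "ln (r k) = ln (pstar$k) - ln (x$k)" using xk by (simp add: r_def ln_divide_pos)
    moreover have "ln (m k) = ln (d k) - ln (Dx k)" using dpos Dxpos by (simp add: m_def ln_divide_pos)
    moreover have "eps k = ln (E k) - ln (d k)" using dpos Epos by (simp add: eps_def ln_divide_pos)
    ultimately show ?thesis by linarith
  qed
  have aM: "(\<Sum>k\<in>UNIV. a k * M k j) = a j" for j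
  proof -
    have "\<And>k. a k * M k j = (x$j / lam) * (y$k * s k * D k j)"
    proof -
      fix k
      have "x$k / Dx k = s k / lam" using hx[of k] Dxpos[of k] lampos by (simp add: field_simps)
      moreover have "a k * M k j = D k j * x$j * y$k * (x$k / Dx k)"
        unfolding a_def M_def by simp
      ultimately show "a k * M k j = (x$j / lam) * (y$k * s k * D k j)" by simp
    qed
    hence "(\<Sum>k\<in>UNIV. a k * M k j) = (x$j / lam) * (\<Sum>k\<in>UNIV. y$k * s k * D k j)"
      by (simp add: sum_distrib_left)
    also have "\<dots> = (x$j / lam) * (lam * y$j)" by (simp only: hy)
    also have "\<dots> = a j" using lampos by (simp add: a_def)
    finally show ?thesis .
  qed
  have F6: "(\<Sum>k\<in>UNIV. a k * (\<Sum>j\<in>UNIV. M k j * ln (r j))) = (\<Sum>j\<in>UNIV. a j * ln (r j))"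
  proof -
    have "(\<Sum>k\<in>UNIV. a k * (\<Sum>j\<in>UNIV. M k j * ln (r j))) = (\<Sum>k\<in>UNIV. \<Sum>j\<in>UNIV. a k * M k j * ln (r j))"
      by (simp add: sum_distrib_left mult.assoc)
    also have "\<dots> = (\<Sum>j\<in>UNIV. \<Sum>k\<in>UNIV. a k * M k j * ln (r j))"
      by (rule sum.swap)
    also have "\<dots> = (\<Sum>j\<in>UNIV. (\<Sum>k\<in>UNIV. a k * M k j) * ln (r j))"
      by (simp add: sum_distrib_right)
    finally show ?thesis using aM by simp
  qed
  have tot: "(\<Sum>k\<in>UNIV. a k * (ln (s' k) - ln (s k)))
      = - (\<Sum>k\<in>UNIV. a k * (\<Sum>j\<in>UNIV. dl k j)) - ln lam * (\<Sum>k\<in>UNIV. a k) - (\<Sum>k\<in>UNIV. a k * eps k)"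
  proof -
    have "(\<Sum>k\<in>UNIV. a k * (ln (s' k) - ln (s k)))
        = (\<Sum>k\<in>UNIV. a k * ln (r k) - a k * (\<Sum>j\<in>UNIV. M k j * ln (r j)) - a k * (\<Sum>j\<in>UNIV. dl k j)
            - ln lam * a k - a k * eps k)"
    proof (rule sum.cong[OF refl])
      fix k
      have "ln (s' k) - ln (s k) = ln (r k) - (\<Sum>j\<in>UNIV. M k j * ln (r j)) - (\<Sum>j\<in>UNIV. dl k j) - ln lam - eps k"
        using F5[of k] F4[of k] by linarith
      thus "a k * (ln (s' k) - ln (s k)) = a k * ln (r k) - a k * (\<Sum>j\<in>UNIV. M k j * ln (r j)) - a k * (\<Sum>j\<in>UNIV. dl k j)
            - ln lam * a k - a k * eps k" by (simp only: right_diff_distrib mult.commute)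
    qed
    also have "\<dots> = (\<Sum>k\<in>UNIV. a k * ln (r k)) - (\<Sum>k\<in>UNIV. a k * (\<Sum>j\<in>UNIV. M k j * ln (r j)))
        - (\<Sum>k\<in>UNIV. a k * (\<Sum>j\<in>UNIV. dl k j)) - ln lam * (\<Sum>k\<in>UNIV. a k) - (\<Sum>k\<in>UNIV. a k * eps k)"
      by (simp add: sum_subtractf sum_distrib_left)
    finally show ?thesis using F6 by simp
  qed
  have epsnn: "eps k \<ge> 0" for k using E_ge[of k] dpos[of k] by (simp add: eps_def)
  have t1: "(\<Sum>k\<in>UNIV. a k * (\<Sum>j\<in>UNIV. dl k j)) \<ge> 0"
    using apos dlnn by (intro sum_nonneg mult_nonneg_nonneg) (auto intro: less_imp_le sum_nonneg)
  have t2: "ln lam * (\<Sum>k\<in>UNIV. a k) \<ge> 0"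
    using lam1 apos by (intro mult_nonneg_nonneg sum_nonneg) (auto intro: less_imp_le)
  have t3: "(\<Sum>k\<in>UNIV. a k * eps k) \<ge> 0"
    using apos epsnn by (intro sum_nonneg mult_nonneg_nonneg) (auto intro: less_imp_le)
  have z1: "(\<Sum>k\<in>UNIV. a k * (\<Sum>j\<in>UNIV. dl k j)) = 0" and z2: "ln lam * (\<Sum>k\<in>UNIV. a k) = 0"
    and z3: "(\<Sum>k\<in>UNIV. a k * eps k) = 0"
    using key0 tot t1 t2 t3 by linarith+
  have dl0: "dl k j = 0" for k j
  proof -
    have "a k * (\<Sum>j\<in>UNIV. dl k j) = 0"
      using z1 sum_nonneg_eq_0_iff[of UNIV "\<lambda>k. a k * (\<Sum>j\<in>UNIV. dl k j)"] apos dlnn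
      by (simp add: less_imp_le sum_nonneg)
    hence "(\<Sum>j\<in>UNIV. dl k j) = 0" using apos[of k] by simp
    thus ?thesis using sum_nonneg_eq_0_iff[of UNIV "dl k"] dlnn by simp
  qed
  have eps0: "eps k = 0" for k
  proof -
    have "a k * eps k = 0"
      using z3 sum_nonneg_eq_0_iff[of UNIV "\<lambda>k. a k * eps k"] apos epsnn by (simp add: less_imp_le)
    thus ?thesis using apos[of k] by simp
  qed
  have lnlam: "ln lam = 0"
  proof -
    have "(\<Sum>k\<in>UNIV. a k) > 0" using apos by (simp add: sum_pos)
    thus ?thesis using z2 by simp
  qed
  have req: "r j = m k" if "M k j > 0" for k j
  proof -
    have "(r j / m k - 1) - ln (r j / m k) = 0" using dl0[of k j] that by (simp add: dl_def)
    hence "ln (r j / m k) = r j / m k - 1" by simp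
    hence "r j / m k = 1" using rpos mpos by (intro ln_eq_minus_one) simp_all
    thus ?thesis using mpos[of k] by simp
  qed
  obtain k0 :: 'k where True by blast
  have "E k0 = d k0"
  proof -
    have "ln (E k0 / d k0) = 0" using eps0 by (simp add: eps_def)
    hence "E k0 / d k0 = 1" using Epos dpos by (simp add: ln_eq_zero_iff)
    thus ?thesis using dpos[of k0] by simp
  qed
  hence "z$k0 * (C *v pstar)$n0 / phat$n0 = z$k0" using deq[of k0] by (simp add: E_def)
  hence Ctight: "(C *v pstar)$n0 = phat$n0" using z_pos[rule_format, of k0] phat_pos[rule_format, of n0] by (simp add: field_simps)
  obtain j0 where j0: "C$n0$j0 = 1"
  proof -
    have "\<exists>j. C$n0$j \<noteq> 0"
    proof (rule ccontr)
      assume "\<not> ?thesis"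
      hence "(C *v pstar)$n0 = 0" by (simp add: Cp_eq)
      thus False using Ctight phat_pos by (metis less_irrefl)
    qed
    thus ?thesis using C01 that by blast
  qed
  have Mj0: "M k j0 > 0" for k
  proof -
    have "D k j0 > 0" using j0 V_nonneg z_pos phat_pos unfolding D_def
      by (simp add: add_nonneg_pos)
    thus ?thesis using x_pos Dxpos by (simp add: M_def)
  qed
  have pred: "\<exists>k'. V$k'$k > 0" for k
  proof -
    have "(k, k) \<in> {(a, b). V$a$b > 0}\<^sup>+" using V_irred unfolding irreducible_mat_def by blast
    thus ?thesis by (induction rule: trancl.induct) auto
  qed
  have sk: "s' k = s k" for k
  proof -
    obtain k' where k': "V$k'$k > 0" using pred by blast
    have "z$k' * C$n0$k / phat$n0 \<ge> 0" using z_pos[rule_format, of k'] phat_pos[rule_format, of n0] Cnn[of n0 k] by simp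
    hence "D k' k > 0" using k' unfolding D_def by linarith
    hence "M k' k > 0" using x_pos Dxpos by (simp add: M_def)
    hence "r k = m k'" by (rule req)
    also have "\<dots> = r j0" using req[OF Mj0[of k']] by simp
    also have "\<dots> = m k" using req[OF Mj0[of k]] by simp
    finally have "ln (s' k) - ln (s k) = 0" using F5[of k] lnlam eps0[of k] by simp
    thus ?thesis using spos by simp
  qed
  show "\<forall>k. \<phi> (SIR V z k pstar / \<gamma>$k) = q$k"
    using sk qp by (simp add: s_def s'_def)
qed

end
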